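(* Let $f^w:\mathbb{R}^n\to\mathbb{R}^C$ be a feed-forward neural network with weight vector $w$, computed as $\phi^w_{(0)}=x$, $f^w_{(k)}=W^w_{k-1}\phi^w_{(k-1)}+b^w_{k-1}$ for $k=1,\ldots,K$, $\phi^w_{(k)}=h(f^w_{(k)})$ for $k=1,\ldots,K-1$, and $f^w(x)=f^w_{(K)}$, where $h$ is a monotonically non-decreasing activation function applied componentwise. Let $x\in\mathbb{R}^n$ be an input point with class label $y\in\{1,\ldots,C\}$, and let $p_\epsilon$ be a probability distribution on $\mathbb{R}_{\geq 0}$. Then $$p(y\mid x,w)\;\geq\;\mathbb{E}_{\epsilon\sim p_\epsilon}\big[\sigma_y(f^{w,\epsilon}_{LB}(x))\big]=:p_{\text{IBP}}(y\mid x,w),$$ where $p(y\mid x,w)$ is the robust likelihood and $f^{w,\epsilon}_{LB}(x)$ the IBP lower-bound logit vector, as defined in the context.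
   Context: $\sigma:\mathbb{R}^C\to\mathbb{R}^C$ is the softmax, $\sigma_c(z)=e^{z_c}/\sum_{j=1}^C e^{z_j}$. For $\epsilon\geq 0$, $f^{w,\epsilon}_{\min}(x)$ denotes a logit vector satisfying $\sigma_y(f^{w,\epsilon}_{\min}(x))=\min_{x':\|x-x'\|_\infty\leq\epsilon}\sigma_y(f^w(x'))$. The robust likelihood is $p(y\mid x,w)=\mathbb{E}_{\epsilon\sim p_\epsilon}[\sigma_y(f^{w,\epsilon}_{\min}(x))]=\int_{\mathbb{R}_{\ge0}}\sigma_y(f^{w,\epsilon}_{\min}(x))p_\epsilon(\epsilon)\,d\epsilon$. Interval Bound Propagation (IBP): for $\epsilon\ge0$ set $\phi^{w,L}_{(0)}=x-\epsilon\mathbf{1}$, $\phi^{w,U}_{(0)}=x+\epsilon\mathbf{1}$, and for $k=1,\ldots,K$: $\hat\mu_k=(\phi^{w,U}_{(k-1)}+\phi^{w,L}_{(k-1)})/2$, $\hat r_k=(\phi^{w,U}_{(k-1)}-\phi^{w,L}_{(k-1)})/2$, $\mu_k=W^w_{k-1}\hat\mu_k+b^w_{k-1}$, $r_k=|W^w_{k-1}|\hat r_k$ (entrywise absolute value), $f^{w,U}_{(k)}=\mu_k+r_k$, $f^{w,L}_{(k)}=\mu_k-r_k$, and $\phi^{w,U}_{(k)}=h(f^{w,U}_{(k)})$, $\phi^{w,L}_{(k)}=h(f^{w,L}_{(k)})$. Set $f^{w,U,\epsilon}=f^{w,U}_{(K)}$, $f^{w,L,\epsilon}=f^{w,L}_{(K)}$.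 The vector $f^{w,\epsilon}_{LB}(x)\in\mathbb{R}^C$ has entries $f^{w,\epsilon}_{LB,j}(x)=f^{w,U,\epsilon}_j$ if $j\neq y$ and $f^{w,\epsilon}_{LB,j}(x)=f^{w,L,\epsilon}_j$ if $j=y$. *)

theory Defs
  imports "HOL-Probability.Probability"
begin

text \<open>Vectors are represented as functions nat => real; only the first d entries
  (d the relevant width) are meaningful. Layer widths are d 0 = n, d 1, ..., d K = C.
  Layer k (k = 0..K-1) has weight matrix W k (entry W k i j, i < d (Suc k), j < d k)
  and bias b k. Classes are indexed 0..C-1.\<close>

definition softmax :: "nat \<Rightarrow> (nat \<Rightarrow> real) \<Rightarrow> nat \<Rightarrow> real" where
  "softmax C z c = exp (z c) / (\<Sum>j<C. exp (z j))"

definition affine ::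
  "(nat \<Rightarrow> nat \<Rightarrow> nat \<Rightarrow> real) \<Rightarrow> (nat \<Rightarrow> nat \<Rightarrow> real) \<Rightarrow> (nat \<Rightarrow> nat) \<Rightarrow> nat
   \<Rightarrow> (nat \<Rightarrow> real) \<Rightarrow> (nat \<Rightarrow> real)" where
  "affine W b d k v = (\<lambda>i. (\<Sum>j<d k. W k i j * v j) + b k i)"

fun net_phi ::
  "(nat \<Rightarrow> nat \<Rightarrow> nat \<Rightarrow> real) \<Rightarrow> (nat \<Rightarrow> nat \<Rightarrow> real) \<Rightarrow> (real \<Rightarrow> real) \<Rightarrow> (nat \<Rightarrow> nat)
   \<Rightarrow> (nat \<Rightarrow> real) \<Rightarrow> nat \<Rightarrow> (nat \<Rightarrow> real)" where
  "net_phi W b h d x 0 = x"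
| "net_phi W b h d x (Suc k) = (\<lambda>i. h (affine W b d k (net_phi W b h d x k) i))"

definition net_out ::
  "(nat \<Rightarrow> nat \<Rightarrow> nat \<Rightarrow> real) \<Rightarrow> (nat \<Rightarrow> nat \<Rightarrow> real) \<Rightarrow> (real \<Rightarrow> real) \<Rightarrow> (nat \<Rightarrow> nat)
   \<Rightarrow> nat \<Rightarrow> (nat \<Rightarrow> real) \<Rightarrow> (nat \<Rightarrow> real)" where
  "net_out W b h d K x = affine W b d (K - 1) (net_phi W b h d x (K - 1))"

definition linf_ball :: "nat \<Rightarrow> (nat \<Rightarrow> real) \<Rightarrow> real \<Rightarrow> (nat \<Rightarrow> real) set" where
  "linf_ball n x \<epsilon> = {x'. \<forall>j<n. \<bar>x j - x' j\<bar> \<le> \<epsilon>}"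

text \<open>Robust likelihood: E_eps [ min over the l_inf ball of sigma_y(f^w(x')) ]
  (the minimum is written as an infimum; they agree whenever the minimum exists).\<close>
definition robust_lik ::
  "(nat \<Rightarrow> nat \<Rightarrow> nat \<Rightarrow> real) \<Rightarrow> (nat \<Rightarrow> nat \<Rightarrow> real) \<Rightarrow> (real \<Rightarrow> real) \<Rightarrow> (nat \<Rightarrow> nat)
   \<Rightarrow> nat \<Rightarrow> real measure \<Rightarrow> (nat \<Rightarrow> real) \<Rightarrow> nat \<Rightarrow> real" where
  "robust_lik W b h d K M x y =
     (\<integral>\<epsilon>. (INF x'\<in>linf_ball (d 0) x \<epsilon>. softmax (d K) (net_out W b h d K x') y) \<partial>M)"

definition ibp_step ::
  "(nat \<Rightarrow> nat \<Rightarrow> nat \<Rightarrow> real) \<Rightarrow> (nat \<Rightarrow> nat \<Rightarrow> real) \<Rightarrow> (nat \<Rightarrow> nat) \<Rightarrow> nat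
   \<Rightarrow> (nat \<Rightarrow> real) \<times> (nat \<Rightarrow> real) \<Rightarrow> (nat \<Rightarrow> real) \<times> (nat \<Rightarrow> real)" where
  "ibp_step W b d k LU =
     (let L = fst LU; U = snd LU;
          muhat = (\<lambda>j. (U j + L j) / 2);
          rhat = (\<lambda>j. (U j - L j) / 2);
          mu = affine W b d k muhat;
          r = (\<lambda>i. \<Sum>j<d k. \<bar>W k i j\<bar> * rhat j)
      in (\<lambda>i. mu i - r i, \<lambda>i. mu i + r i))"

fun ibp_phi ::
  "(nat \<Rightarrow> nat \<Rightarrow> nat \<Rightarrow> real) \<Rightarrow> (nat \<Rightarrow> nat \<Rightarrow> real) \<Rightarrow> (real \<Rightarrow> real) \<Rightarrow> (nat \<Rightarrow> nat)
   \<Rightarrow> (nat \<Rightarrow> real) \<Rightarrow> real \<Rightarrow> nat \<Rightarrow> (nat \<Rightarrow> real) \<times> (nat \<Rightarrow> real)" where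
  "ibp_phi W b h d x \<epsilon> 0 = (\<lambda>j. x j - \<epsilon>, \<lambda>j. x j + \<epsilon>)"
| "ibp_phi W b h d x \<epsilon> (Suc k) =
     (let LU = ibp_step W b d k (ibp_phi W b h d x \<epsilon> k)
      in (\<lambda>i. h (fst LU i), \<lambda>i. h (snd LU i)))"

definition ibp_out ::
  "(nat \<Rightarrow> nat \<Rightarrow> nat \<Rightarrow> real) \<Rightarrow> (nat \<Rightarrow> nat \<Rightarrow> real) \<Rightarrow> (real \<Rightarrow> real) \<Rightarrow> (nat \<Rightarrow> nat)
   \<Rightarrow> nat \<Rightarrow> (nat \<Rightarrow> real) \<Rightarrow> real \<Rightarrow> (nat \<Rightarrow> real) \<times> (nat \<Rightarrow> real)" where
  "ibp_out W b h d K x \<epsilon> = ibp_step W b d (K - 1) (ibp_phi W b h d x \<epsilon> (K - 1))"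

definition f_LB ::
  "(nat \<Rightarrow> nat \<Rightarrow> nat \<Rightarrow> real) \<Rightarrow> (nat \<Rightarrow> nat \<Rightarrow> real) \<Rightarrow> (real \<Rightarrow> real) \<Rightarrow> (nat \<Rightarrow> nat)
   \<Rightarrow> nat \<Rightarrow> (nat \<Rightarrow> real) \<Rightarrow> nat \<Rightarrow> real \<Rightarrow> (nat \<Rightarrow> real)" where
  "f_LB W b h d K x y \<epsilon> =
     (\<lambda>j. if j = y then fst (ibp_out W b h d K x \<epsilon>) j else snd (ibp_out W b h d K x \<epsilon>) j)"

definition ibp_lik ::
  "(nat \<Rightarrow> nat \<Rightarrow> nat \<Rightarrow> real) \<Rightarrow> (nat \<Rightarrow> nat \<Rightarrow> real) \<Rightarrow> (real \<Rightarrow> real) \<Rightarrow> (nat \<Rightarrow> nat)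
   \<Rightarrow> nat \<Rightarrow> real measure \<Rightarrow> (nat \<Rightarrow> real) \<Rightarrow> nat \<Rightarrow> real" where
  "ibp_lik W b h d K M x y = (\<integral>\<epsilon>. softmax (d K) (f_LB W b h d K x y \<epsilon>) y \<partial>M)"

end

theory Submission
  imports Defs
begin

lemma mid_abs: fixes l v u :: real shows "l \<le> v \<Longrightarrow> v \<le> u \<Longrightarrow> \<bar>v - (u + l) / 2\<bar> \<le> (u - l) / 2"
  unfolding abs_le_iff by (intro conjI) (simp_all add: field_simps)

lemma ibp_step_sound:
  assumes "\<forall>j<d k. fst LU j \<le> v j \<and> v j \<le> snd LU j"
  shows "fst (ibp_step W b d k LU) i \<le> affine W b d k v i \<and>
         affine W b d k v i \<le> snd (ibp_step W b d k LU) i"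
proof -
  define L where "L = fst LU"
  define U where "U = snd LU"
  define mh where "mh = (\<lambda>j. (U j + L j) / 2)"
  define rh where "rh = (\<lambda>j. (U j - L j) / 2)"
  have A: "affine W b d k v i - affine W b d k mh i = (\<Sum>j<d k. W k i j * (v j - mh j))"
    by (simp add: affine_def sum_subtractf[symmetric] algebra_simps)
  have "\<bar>\<Sum>j<d k. W k i j * (v j - mh j)\<bar> \<le> (\<Sum>j<d k. \<bar>W k i j * (v j - mh j)\<bar>)"
    by (rule sum_abs)
  also have "\<dots> \<le> (\<Sum>j<d k. \<bar>W k i j\<bar> * rh j)"
  proof (rule sum_mono)
    fix j assume "j \<in> {..<d k}"
    then have "fst LU j \<le> v j \<and> v j \<le> snd LU j" using assms by auto
    then have "\<bar>v j - mh j\<bar> \<le> rh j" unfolding mh_def rh_def L_def U_def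
      by (intro mid_abs) auto
    then show "\<bar>W k i j * (v j - mh j)\<bar> \<le> \<bar>W k i j\<bar> * rh j"
      by (simp add: abs_mult mult_left_mono)
  qed
  finally have B: "\<bar>affine W b d k v i - affine W b d k mh i\<bar> \<le> (\<Sum>j<d k. \<bar>W k i j\<bar> * rh j)"
    using A by simp
  show ?thesis using B
    unfolding ibp_step_def Let_def mh_def rh_def L_def U_def by auto
qed

lemma ibp_phi_sound:
  assumes "mono h" "x' \<in> linf_ball (d 0) x \<epsilon>"
  shows "\<forall>j<d k. fst (ibp_phi W b h d x \<epsilon> k) j \<le> net_phi W b h d x' k j \<and>
                  net_phi W b h d x' k j \<le> snd (ibp_phi W b h d x \<epsilon> k) j"
proof (induction k)
  case 0
  then show ?case using assms(2) by (auto simp: linf_ball_def abs_le_iff)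
next
  case (Suc k)
  show ?case
  proof (intro allI impI)
    fix j
    have S: "fst (ibp_step W b d k (ibp_phi W b h d x \<epsilon> k)) j \<le> affine W b d k (net_phi W b h d x' k) j \<and>
         affine W b d k (net_phi W b h d x' k) j \<le> snd (ibp_step W b d k (ibp_phi W b h d x \<epsilon> k)) j"
      by (rule ibp_step_sound) (use Suc in auto)
    then show "fst (ibp_phi W b h d x \<epsilon> (Suc k)) j \<le> net_phi W b h d x' (Suc k) j \<and>
          net_phi W b h d x' (Suc k) j \<le> snd (ibp_phi W b h d x \<epsilon> (Suc k)) j"
      using assms(1) by (auto simp: Let_def monoD)
  qed
qed

lemma softmax_mono:
  assumes "y < C" "z' y \<le> z y" "\<And>j. j < C \<Longrightarrow> j \<noteq> y \<Longrightarrow> z j \<le> z' j"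
  shows "softmax C z' y \<le> softmax C z y"
proof -
  have eq: "softmax C z y = 1 / (\<Sum>j<C. exp (z j - z y))" for z :: "nat \<Rightarrow> real"
  proof -
    have "(\<Sum>j<C. exp (z j - z y)) = (\<Sum>j<C. exp (z j)) / exp (z y)"
      by (simp add: exp_diff sum_divide_distrib)
    then show ?thesis by (simp add: softmax_def)
  qed
  have pos: "0 < (\<Sum>j<C. exp (z j - z y))"
    by (rule sum_pos) (use assms(1) in auto)
  have le: "(\<Sum>j<C. exp (z j - z y)) \<le> (\<Sum>j<C. exp (z' j - z' y))"
  proof (rule sum_mono)
    fix j assume "j \<in> {..<C}"
    then show "exp (z j - z y) \<le> exp (z' j - z' y)"
      using assms by (cases "j = y") (auto, smt (verit))
  qed
  show ?thesis unfolding eq[of z] eq[of z'] using pos le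
    by (simp add: frac_le)
qed

lemma softmax_bounds: "y < C \<Longrightarrow> 0 \<le> softmax C z y \<and> softmax C z y \<le> 1"
proof -
  assume y: "y < C"
  have "exp (z y) \<le> (\<Sum>j<C. exp (z j))"
    using y by (intro member_le_sum) auto
  moreover have "0 < (\<Sum>j<C. exp (z j))" by (rule sum_pos) (use y in auto)
  ultimately show ?thesis by (auto simp: softmax_def)
qed

theorem proposition1:
  fixes W :: "nat \<Rightarrow> nat \<Rightarrow> nat \<Rightarrow> real" and b :: "nat \<Rightarrow> nat \<Rightarrow> real"
    and h :: "real \<Rightarrow> real" and d :: "nat \<Rightarrow> nat" and K :: nat
    and M :: "real measure" and x :: "nat \<Rightarrow> real" and y :: nat
  assumes "mono h"
    and "1 \<le> K"
    and "y < d K"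
    and "prob_space M"
    and "sets M = sets borel"
    and "AE \<epsilon> in M. 0 \<le> \<epsilon>"
  shows "robust_lik W b h d K M x y \<ge> ibp_lik W b h d K M x y"
proof -
  interpret prob_space M by fact
  define s where "s = (\<lambda>x'. softmax (d K) (net_out W b h d K x') y)"
  define g where "g = (\<lambda>\<epsilon>. INF x'\<in>linf_ball (d 0) x \<epsilon>. s x')"
  have s01: "0 \<le> s x' \<and> s x' \<le> 1" for x' unfolding s_def using softmax_bounds assms(3) by blast
  have ne: "0 \<le> \<epsilon> \<Longrightarrow> linf_ball (d 0) x \<epsilon> \<noteq> {}" for \<epsilon>
    unfolding linf_ball_def by (rule_tac ex_in_conv[THEN iffD1]) (auto intro!: exI[of _ x])
  have bdd: "bdd_below (s ` A)" for A unfolding bdd_below_def using s01 by blast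
  have g01: "0 \<le> \<epsilon> \<Longrightarrow> 0 \<le> g \<epsilon> \<and> g \<epsilon> \<le> 1" for \<epsilon>
  proof -
    assume e: "0 \<le> \<epsilon>"
    have "x \<in> linf_ball (d 0) x \<epsilon>" using e by (auto simp: linf_ball_def)
    then have "g \<epsilon> \<le> s x" unfolding g_def by (intro cINF_lower bdd)
    moreover have "0 \<le> g \<epsilon>" unfolding g_def using ne[OF e] s01 by (intro cINF_greatest) auto
    ultimately show ?thesis using s01[of x] by auto
  qed
  have ballneg: "\<epsilon> < 0 \<Longrightarrow> linf_ball (d 0) x \<epsilon> = linf_ball (d 0) x (-1)" for \<epsilon>
  proof -
    assume e: "\<epsilon> < 0"
    show ?thesis
    proof (cases "d 0 = 0")
      case True then show ?thesis by (simp add: linf_ball_def)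
    next
      case False
      then have "linf_ball (d 0) x e = {}" if "e < 0" for e :: real
        unfolding linf_ball_def using that
        by (auto dest!: spec[of _ 0] intro: order.strict_trans1[OF abs_ge_zero])
      then show ?thesis using e by simp
    qed
  qed
  have mono1: "mono_on {..<0} (\<lambda>\<epsilon>. - g \<epsilon>)"
  proof (rule mono_onI)
    fix e1 e2 :: real assume "e1 \<in> {..<0}" "e2 \<in> {..<0}"
    then have "g e1 = g e2" unfolding g_def using ballneg[of e1] ballneg[of e2] by simp
    then show "- g e1 \<le> - g e2" by simp
  qed
  have mono2: "mono_on {0..} (\<lambda>\<epsilon>. - g \<epsilon>)"
  proof (rule mono_onI)
    fix e1 e2 :: real assume "e1 \<in> {0..}" "e2 \<in> {0..}" "e1 \<le> e2"
    then have "g e2 \<le> g e1" unfolding g_def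
      by (intro cINF_superset_mono ne bdd) (auto simp: linf_ball_def)
    then show "- g e1 \<le> - g e2" by simp
  qed
  have "(\<lambda>\<epsilon>. - g \<epsilon>) \<in> borel_measurable borel"
    by (rule borel_measurable_piecewise_mono[of "{{..<0}, {0..}}"])
       (use mono1 mono2 in auto)
  then have "(\<lambda>\<epsilon>. - (- g \<epsilon>)) \<in> borel_measurable borel" by measurable
  then have gm: "g \<in> borel_measurable M"
    unfolding measurable_cong_sets[OF assms(5) refl] by simp
  have gint: "integrable M g"
  proof (rule integrable_const_bound[where B=1])
    show "AE \<epsilon> in M. norm (g \<epsilon>) \<le> 1"
    proof (rule eventually_mono[OF assms(6)])
      fix e :: real assume "0 \<le> e" then show "norm (g e) \<le> 1" using g01[of e] by simp
    qed
  qed (rule gm)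
  have le: "AE \<epsilon> in M. softmax (d K) (f_LB W b h d K x y \<epsilon>) y \<le> g \<epsilon>"
    using assms(6)
  proof eventually_elim
    case (elim \<epsilon>)
    show ?case unfolding g_def
    proof (rule cINF_greatest[OF ne[OF elim]])
      fix x' assume x': "x' \<in> linf_ball (d 0) x \<epsilon>"
      have P: "\<forall>j<d (K-1). fst (ibp_phi W b h d x \<epsilon> (K-1)) j \<le> net_phi W b h d x' (K-1) j \<and>
                  net_phi W b h d x' (K-1) j \<le> snd (ibp_phi W b h d x \<epsilon> (K-1)) j"
        by (rule ibp_phi_sound[where d=d and x=x and x'=x' and h=h, OF assms(1) x'])
      have Q: "fst (ibp_out W b h d K x \<epsilon>) i \<le> net_out W b h d K x' i \<and>
               net_out W b h d K x' i \<le> snd (ibp_out W b h d K x \<epsilon>) i" for i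
        unfolding ibp_out_def net_out_def by (rule ibp_step_sound[where d=d and k="K-1" and LU="ibp_phi W b h d x \<epsilon> (K - 1)" and v="net_phi W b h d x' (K - 1)", OF P])
      show "softmax (d K) (f_LB W b h d K x y \<epsilon>) y \<le> s x'"
        unfolding s_def
        by (rule softmax_mono[OF assms(3)]) (use Q in \<open>auto simp: f_LB_def\<close>)
    qed
  qed
  have "ibp_lik W b h d K M x y \<le> (\<integral>\<epsilon>. g \<epsilon> \<partial>M)"
    unfolding ibp_lik_def
  proof (rule integral_mono_AE'[OF gint le])
    show "AE \<epsilon> in M. 0 \<le> g \<epsilon>"
    proof (rule eventually_mono[OF assms(6)])
      fix e :: real assume "0 \<le> e" then show "0 \<le> g e" using g01[of e] by simp
    qed
  qed
  then show ?thesis unfolding robust_lik_def g_def s_def by simp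
qed

end
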